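(* Let ${\cal X}\subset\mathbb{R}^d$ be closed and let $\mathbb{H}$ be an RKHS of real functions on ${\cal X}$ with kernel $k$ such that (D) $\mathbb{H}\subset C_0({\cal X})$, where $C_0({\cal X})$ is the space of continuous real functions on ${\cal X}$ vanishing at infinity, and (E) $\mathbb{H}$ is dense in $L^2(\pi)$ for every probability measure $\pi$ on ${\cal X}$. Then for every $N\in\mathbb{N}$ the tensor product RKHS $\mathbb{H}^{\otimes N}$ on ${\cal X}^N$ is characteristic.
   Context: $\mathbb{H}^{\otimes N}=\mathbb{H}\otimes\cdots\otimes\mathbb{H}$ is the RKHS on ${\cal X}^N$ with kernel $k^{\otimes N}({\bf x}^{1:N},{\bf y}^{1:N})=\prod_{n=1}^N k({\bf x}^n,{\bf y}^n)$ and canonical feature map ${\bf x}^{1:N}\mapsto\phi({\bf x}^1)\otimes\cdots\otimes\phi({\bf x}^N)$, $\phi({\bf x})=k(\cdot,{\bf x})$. An RKHS $\mathbb{F}$ on a space ${\cal S}$ with feature map $\psi$ is called characteristic if the mean embedding map $\pi\mapsto\mu_\pi=\mathbb{E}_{X\sim\pi}[\psi(X)]\in\mathbb{F}$ is injective on the set of probability distributions on ${\cal S}$. *)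

theory Defs
  imports "HOL-Probability.Probability"
begin

text \<open>The RKHS of the kernel k(x,y) = <phi x, phi y> realised through a feature
  map phi into a Hilbert space: its elements are the functions x |-> <h, phi x>.\<close>
definition rkhs :: "('a \<Rightarrow> 'h::real_inner) \<Rightarrow> ('a \<Rightarrow> real) set" where
  "rkhs \<phi> = {f. \<exists>h. f = (\<lambda>x. inner h (\<phi> x))}"

definition feature_kernel :: "('a \<Rightarrow> 'h::real_inner) \<Rightarrow> 'a \<Rightarrow> 'a \<Rightarrow> real" where
  "feature_kernel \<phi> x y = inner (\<phi> x) (\<phi> y)"

definition C0_on :: "('a::topological_space) set \<Rightarrow> ('a \<Rightarrow> real) set" where
  "C0_on X = {f. continuous_on X f \<and>
      (\<forall>\<epsilon>>0. \<exists>K. compact K \<and> (\<forall>x\<in>X - K. \<bar>f x\<bar> < \<epsilon>))}"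

definition dense_in_L2 :: "('a \<Rightarrow> real) set \<Rightarrow> 'a measure \<Rightarrow> bool" where
  "dense_in_L2 H \<pi> \<longleftrightarrow>
     (\<forall>f\<in>borel_measurable \<pi>. integrable \<pi> (\<lambda>x. (f x)\<^sup>2) \<longrightarrow>
        (\<forall>\<epsilon>>0. \<exists>g\<in>H. (\<integral>x. (f x - g x)\<^sup>2 \<partial>\<pi>) < \<epsilon>))"

definition mean_embedding :: "'a measure \<Rightarrow> ('a \<Rightarrow> 'b::{banach,second_countable_topology}) \<Rightarrow> 'b" where
  "mean_embedding P \<psi> = (\<integral>x. \<psi> x \<partial>P)"

definition characteristic :: "'a measure \<Rightarrow> ('a \<Rightarrow> 'b::{banach,second_countable_topology}) \<Rightarrow> bool" where
  "characteristic S \<psi> \<longleftrightarrow>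
     (\<forall>P Q. prob_space P \<and> prob_space Q \<and> sets P = sets S \<and> sets Q = sets S \<and>
        mean_embedding P \<psi> = mean_embedding Q \<psi> \<longrightarrow> P = Q)"

definition prod_space :: "('a::topological_space) set \<Rightarrow> nat \<Rightarrow> (nat \<Rightarrow> 'a) measure" where
  "prod_space X N = PiM {..<N} (\<lambda>_. restrict_space borel X)"

end

theory Submission
  imports Defs
begin

lemma parallelogram_aux:
  fixes a b :: "'a::real_inner"
  shows "norm (a + b)^2 + norm (a - b)^2 = 2 * norm a ^2 + 2 * norm b ^2"
  by (simp add: power2_norm_eq_inner inner_add inner_diff inner_commute algebra_simps)

lemma projection_exists:
  fixes V :: "'a::{real_inner,complete_space} set"
  assumes sub: "subspace V" and cl: "closed V"
  shows "\<exists>p\<in>V. \<forall>v\<in>V. inner (h - p) v = 0"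
proof -
  define D where "D = (\<lambda>v. norm (h - v)) ` V"
  define d where "d = Inf D"
  have V0: "0 \<in> V" using sub by (simp add: subspace_0)
  have Dne: "D \<noteq> {}" using V0 D_def by auto
  have Dbd: "bdd_below D" unfolding D_def by (rule bdd_belowI[of _ 0]) auto
  have dle: "d \<le> norm (h - v)" if "v \<in> V" for v
    unfolding d_def D_def using that Dbd D_def by (auto intro!: cInf_lower)
  have d0: "0 \<le> d" unfolding d_def using Dne by (auto intro!: cInf_greatest simp: D_def)
  have "\<exists>v\<in>V. norm (h - v)^2 < d^2 + 1 / (Suc n)" for n
  proof -
    have "d < sqrt (d^2 + 1 / Suc n)"
      using d0 by (metis add_pos_pos of_nat_0_less_iff real_sqrt_less_mono real_sqrt_unique zero_less_Suc zero_less_divide_1_iff less_add_same_cancel1)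
    then obtain y where "y \<in> D" "y < sqrt (d^2 + 1 / Suc n)"
      using cInf_lessD[OF Dne] d_def by blast
    then obtain v where v: "v \<in> V" "norm (h - v) < sqrt (d^2 + 1 / Suc n)" unfolding D_def by auto
    then have "norm (h - v)^2 < (sqrt (d^2 + 1 / Suc n))^2"
      by (intro power_strict_mono) auto
    then show ?thesis using v by (auto simp: add_pos_pos)
  qed
  then obtain v where v: "\<And>n. v n \<in> V" "\<And>n. norm (h - v n)^2 < d^2 + 1 / Suc n"
    by metis
  have mid: "norm (v k - v m)^2 \<le> 2 / Suc k + 2 / Suc m" for k m
  proof -
    have "(1/2) *\<^sub>R (v k + v m) \<in> V" using sub v(1) by (simp add: subspace_add subspace_scale)
    then have "d \<le> norm (h - (1/2) *\<^sub>R (v k + v m))" by (rule dle)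
    then have "d^2 \<le> norm (h - (1/2) *\<^sub>R (v k + v m))^2" using d0 by (simp add: power_mono)
    moreover have "2 *\<^sub>R (h - (1/2) *\<^sub>R (v k + v m)) = (h - v k) + (h - v m)"
      by (simp add: algebra_simps scaleR_2)
    then have E1: "norm ((h - v k) + (h - v m))^2 = 4 * norm (h - (1/2) *\<^sub>R (v k + v m))^2"
      by (metis norm_scaleR abs_numeral power_mult_distrib power2_eq_square numeral_times_numeral semiring_norm(2) semiring_norm(6) semiring_norm(13) num_double)
    moreover have E2: "norm ((h - v k) - (h - v m))^2 = norm (v k - v m)^2" by (simp add: norm_minus_commute)
    ultimately have "norm (v k - v m)^2 \<le> 2 * norm (h - v k)^2 + 2 * norm (h - v m)^2 - 4 * d^2"
      using parallelogram_aux[of "h - v k" "h - v m"] by linarith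
    then show ?thesis using v(2)[of k] v(2)[of m] by linarith
  qed
  have "Cauchy v"
  proof (rule metric_CauchyI)
    fix e :: real assume e: "e > 0"
    obtain M :: nat where M: "4 / e^2 < M" using reals_Archimedean2 by blast
    show "\<exists>M. \<forall>m\<ge>M. \<forall>n\<ge>M. dist (v m) (v n) < e"
    proof (intro exI allI impI)
      fix m n assume mn: "M \<le> m" "M \<le> n"
      have "2 / Suc m \<le> 2 / Suc M" "2 / Suc n \<le> 2 / Suc M" using mn by (auto simp: frac_le)
      moreover have "4 / Suc M < e^2"
      proof -
        have "4 / e^2 < real (Suc M)" using M by simp
        then have "4 < real (Suc M) * e^2" using e by (simp add: divide_less_eq)
        then show ?thesis by (simp add: divide_less_eq mult.commute)
      qed
      ultimately have "norm (v m - v n)^2 < e^2" using mid[of m n] by linarith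
      then show "dist (v m) (v n) < e" using e by (simp add: dist_norm power_less_imp_less_base)
    qed
  qed
  then obtain p where p: "v \<longlonglongrightarrow> p" using convergent_eq_Cauchy by blast
  have pV: "p \<in> V" using cl v(1) p closed_sequentially by blast
  have "(\<lambda>n. norm (h - v n)^2) \<longlonglongrightarrow> norm (h - p)^2"
    by (intro tendsto_intros p)
  moreover have "(\<lambda>n. d^2 + 1 / Suc n) \<longlonglongrightarrow> d^2 + 0"
    by (intro tendsto_intros LIMSEQ_inverse_real_of_nat[unfolded inverse_eq_divide] )
  ultimately have pmin: "norm (h - p)^2 \<le> d^2"
    using v(2) by (intro LIMSEQ_le) (auto intro: less_imp_le)
  show ?thesis
  proof (intro bexI[OF _ pV] ballI)
    fix w assume w: "w \<in> V"
    define c where "c = inner (h - p) w"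
    define n where "n = norm w ^2"
    define t where "t = c / (n + 1)"
    have n0: "0 \<le> n" unfolding n_def by simp
    have "p + t *\<^sub>R w \<in> V" using sub pV w by (simp add: subspace_add subspace_scale)
    then have "d^2 \<le> norm (h - (p + t *\<^sub>R w))^2" using dle d0 by (simp add: power_mono)
    also have "norm (h - (p + t *\<^sub>R w))^2 = norm (h - p)^2 - 2 * t * c + t^2 * n"
      unfolding c_def n_def power2_norm_eq_inner by (simp add: inner_diff inner_add inner_commute algebra_simps power2_eq_square)
    finally have "0 \<le> t^2 * n - 2 * t * c" using pmin by linarith
    moreover have ct: "c = t*(n+1)" unfolding t_def using n0 by simp
    then have "t^2 * n - 2*t*c = - (t^2 * (n+2))" by (simp add: algebra_simps power2_eq_square)
    ultimately have "t^2 * (n+2) \<le> 0" by linarith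
    then have "t = 0" using n0 by (auto simp add: mult_le_0_iff)
    then have "c = 0" using ct by simp
    then show "inner (h - p) w = 0" unfolding c_def by simp
  qed
qed



lemma ext_zero:
  fixes \<phi> :: "'b \<Rightarrow> 'h::{real_inner,complete_space}" and L :: "'h \<Rightarrow> real"
  assumes add: "\<And>a b. L (a + b) = L a + L b" and scl: "\<And>c a. L (c *\<^sub>R a) = c * L a"
    and bd: "\<And>a. \<bar>L a\<bar> \<le> C * norm a" and gen: "\<And>z. z \<in> X \<Longrightarrow> L (\<phi> z) = 0"
    and orth: "\<And>q. (\<And>z. z \<in> X \<Longrightarrow> inner q (\<phi> z) = 0) \<Longrightarrow> L q = 0"
  shows "L h = 0"
proof -
  have bl: "bounded_linear L"
    by (rule bounded_linear_intro[where K=C]) (use add scl bd in \<open>auto simp: mult.commute\<close>)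
  define Z where "Z = {a. L a = 0}"
  have "L 0 = 0" using scl[of 0 0] by simp
  then have subZ: "subspace Z" unfolding Z_def subspace_def
    using add scl by auto
  have clZ: "closed Z" unfolding Z_def
    by (intro closed_Collect_eq continuous_intros bounded_linear.continuous_on[OF bl])
  obtain p where p: "p \<in> Z" "\<And>v. v \<in> Z \<Longrightarrow> inner (h - p) v = 0"
    using projection_exists[OF subZ clZ, of h] by blast
  have "L (h - p) = 0"
    by (rule orth) (use p gen Z_def in auto)
  moreover have "L h = L p + L (h - p)" using add[of p "h - p"] by simp
  ultimately show ?thesis using p Z_def by simp
qed

lemma weak_meas_span:
  fixes \<psi> :: "'a \<Rightarrow> 'g::{real_inner,complete_space}"
  assumes gen: "\<And>y. y \<in> space S \<Longrightarrow> (\<lambda>x. inner (\<psi> x) (\<psi> y)) \<in> borel_measurable S"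
  shows "(\<lambda>x. inner (\<psi> x) c) \<in> borel_measurable S"
proof -
  define Z where "Z = {c. (\<lambda>x. inner (\<psi> x) c) \<in> borel_measurable S}"
  have subZ: "subspace Z" unfolding Z_def subspace_def
    by (auto simp: inner_add_right)
  have clZ: "closed Z" unfolding closed_sequential_limits
  proof (intro allI impI)
    fix v l assume vl: "(\<forall>n. v n \<in> Z) \<and> v \<longlonglongrightarrow> l"
    show "l \<in> Z" unfolding Z_def
    proof (simp, rule borel_measurable_LIMSEQ_real)
      fix x show "(\<lambda>n. inner (\<psi> x) (v n)) \<longlonglongrightarrow> inner (\<psi> x) l"
        using vl by (intro tendsto_intros) auto
    next
      fix n show "(\<lambda>x. inner (\<psi> x) (v n)) \<in> borel_measurable S" using vl Z_def by auto
    qed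
  qed
  obtain p where p: "p \<in> Z" "\<And>v. v \<in> Z \<Longrightarrow> inner (c - p) v = 0"
    using projection_exists[OF subZ clZ, of c] by blast
  have "(\<lambda>x. inner (\<psi> x) p) \<in> borel_measurable S" using p Z_def by auto
  moreover have "inner (\<psi> x) c = inner (\<psi> x) p" if "x \<in> space S" for x
  proof -
    have "\<psi> x \<in> Z" using gen[OF that] Z_def by simp
    then have "inner (c - p) (\<psi> x) = 0" using p by blast
    then show ?thesis by (metis inner_commute inner_diff_left eq_iff_diff_eq_0)
  qed
  ultimately show ?thesis by (subst measurable_cong[where g="\<lambda>x. inner (\<psi> x) p"]) auto
qed



lemma cball_as_halfspaces:
  fixes z0 :: "'g::real_inner"
  assumes D: "\<And>U. open U \<Longrightarrow> U \<noteq> {} \<Longrightarrow> \<exists>d\<in>D. d \<in> U" and r: "r \<ge> 0"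
  shows "cball z0 r = {w. \<forall>c\<in>D. inner (w - z0) c \<le> r * norm c}"
proof safe
  fix w c assume "w \<in> cball z0 r" "c \<in> D"
  then have "norm (w - z0) \<le> r" by (simp add: dist_norm norm_minus_commute)
  have "inner (w - z0) c \<le> norm (w - z0) * norm c"
    using Cauchy_Schwarz_ineq2[of "w - z0" c] by linarith
  also have "\<dots> \<le> r * norm c" using \<open>norm (w - z0) \<le> r\<close> by (intro mult_right_mono) auto
  finally show "inner (w - z0) c \<le> r * norm c" .
next
  fix w assume H: "\<forall>c\<in>D. inner (w - z0) c \<le> r * norm c"
  show "w \<in> cball z0 r"
  proof (rule ccontr)
    assume "w \<notin> cball z0 r"
    define u where "u = w - z0"
    have ur: "norm u > r" using \<open>w \<notin> cball z0 r\<close> by (simp add: u_def dist_norm norm_minus_commute)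
    define \<delta> where "\<delta> = norm u * (norm u - r) / (2 * (norm u + r))"
    have \<delta>: "\<delta> > 0" unfolding \<delta>_def using ur r by (auto intro!: divide_pos_pos mult_pos_pos)
    obtain c where c: "c \<in> D" "c \<in> ball u \<delta>" using D[of "ball u \<delta>"] \<delta> by auto
    have cu: "norm (c - u) < \<delta>" using c by (simp add: dist_norm norm_minus_commute)
    have "inner u c = inner u u + inner u (c - u)" by (simp add: inner_diff_right)
    moreover have "inner u (c - u) \<ge> - (norm u * \<delta>)"
    proof -
      have "norm u * norm (c - u) \<le> norm u * \<delta>" using cu by (intro mult_left_mono) auto
      then show ?thesis using Cauchy_Schwarz_ineq2[of u "c - u"] by linarith
    qed
    ultimately have i1: "inner u c \<ge> norm u ^2 - norm u * \<delta>" by (simp add: power2_norm_eq_inner)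
    have "norm c \<le> norm u + norm (c - u)" by (metis add.commute diff_add_cancel norm_triangle_ineq)
    then have i2: "r * norm c \<le> r * (norm u + \<delta>)" using cu r
      by (intro mult_left_mono) auto
    have "\<delta> * (2 * (norm u + r)) = norm u * (norm u - r)" unfolding \<delta>_def using ur r by simp
    then have e2: "2 * (\<delta> * (norm u + r)) = norm u * (norm u - r)" by (simp add: algebra_simps)
    have "norm u * (norm u - r) > 0" using ur r by (intro mult_pos_pos) auto
    then have "\<delta> * (norm u + r) < norm u * (norm u - r)" using e2 by linarith
    then have "r * (norm u + \<delta>) < norm u ^2 - norm u * \<delta>"
      by (simp add: algebra_simps power2_eq_square)
    then have "r * norm c < inner u c" using i1 i2 by linarith
    moreover have "inner u c \<le> r * norm c" using H c(1) u_def by blast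
    ultimately show False by linarith
  qed
qed

lemma weak_to_borel:
  fixes \<psi> :: "'a \<Rightarrow> 'g::{real_inner,second_countable_topology}"
  assumes W: "\<And>c. (\<lambda>x. inner (\<psi> x) c) \<in> borel_measurable S"
  shows "\<psi> \<in> borel_measurable S"
proof -
  obtain D :: "'g set" where cD: "countable D" and D: "\<And>X. open X \<Longrightarrow> X \<noteq> {} \<Longrightarrow> \<exists>d\<in>D. d \<in> X"
    by (erule countable_dense_setE)
  have cb: "\<psi> -` cball z0 r \<inter> space S \<in> sets S" if "r \<ge> 0" for z0 r
  proof -
    have mem: "\<psi> x \<in> cball z0 r \<longleftrightarrow> (\<forall>c\<in>D. inner (\<psi> x - z0) c \<le> r * norm c)" for x
      using cball_as_halfspaces[OF D that, of z0] unfolding set_eq_iff mem_Collect_eq by (rule spec)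
    have "\<psi> -` cball z0 r \<inter> space S = (\<Inter>c\<in>D. {x\<in>space S. inner (\<psi> x - z0) c \<le> r * norm c}) \<inter> space S"
      using mem by blast
    also have "\<dots> \<in> sets S"
    proof (cases "D = {}")
      case True then show ?thesis by simp
    next
      case False
      have "(\<Inter>c\<in>D. {x\<in>space S. inner (\<psi> x - z0) c \<le> r * norm c}) \<in> sets S"
        using W by (intro sets.countable_INT' cD False) (auto simp: inner_diff_left)
      then show ?thesis by auto
    qed
    finally show ?thesis .
  qed
  show ?thesis
  proof (rule borel_measurableI)
    fix U :: "'g set" assume U: "open U"
    define I where "I = {(c, q). c \<in> D \<and> q \<in> \<rat> \<and> q > 0 \<and> cball c q \<subseteq> U}"
    have cI: "countable I"
      by (rule countable_subset[of _ "D \<times> \<rat>"]) (auto simp: I_def cD countable_rat)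
    have "U = (\<Union>(c, q)\<in>I. cball c q)"
    proof
      show "(\<Union>(c, q)\<in>I. cball c q) \<subseteq> U" unfolding I_def by auto
      show "U \<subseteq> (\<Union>(c, q)\<in>I. cball c q)"
      proof
        fix z assume "z \<in> U"
        then obtain e where e: "e > 0" "ball z e \<subseteq> U" using U open_contains_ball by blast
        obtain c where c: "c \<in> D" "c \<in> ball z (e/3)" using D[of "ball z (e/3)"] e by auto
        obtain q where q: "q \<in> \<rat>" "e/3 < q" "q < 2*e/3"
          using Rats_dense_in_real[of "e/3" "2*e/3"] e by auto
        have "cball c q \<subseteq> U"
        proof
          fix y assume "y \<in> cball c q"
          then have "dist z y < e" using c q dist_triangle[of z y c]
            by (simp add: dist_commute)
          then show "y \<in> U" using e by auto
        qed
        moreover have "z \<in> cball c q" using c q by (simp add: dist_commute)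
        moreover have "q > 0" using q e by linarith
        ultimately have "(c, q) \<in> I" "z \<in> cball c q" unfolding I_def using c q by auto
        then show "z \<in> (\<Union>(c, q)\<in>I. cball c q)" by blast
      qed
    qed
    then have "\<psi> -` U \<inter> space S = (\<Union>(c, q)\<in>I. \<psi> -` cball c q \<inter> space S)" by auto
    also have "\<dots> \<in> sets S"
      using cb I_def by (intro sets.countable_UN'' cI) auto
    finally show "\<psi> -` U \<inter> space S \<in> sets S" .
  qed
qed



lemma upgrade:
  fixes Good :: "(nat \<Rightarrow> 'x) \<Rightarrow> bool" and A B BM :: "'x set"
  assumes rep: "\<And>m fac g'. m < N \<Longrightarrow> (\<And>n. n < N \<Longrightarrow> fac n \<in> BM) \<Longrightarrow>
          (\<And>g. g \<in> A \<Longrightarrow> Good (fac(m:=g))) \<Longrightarrow> g' \<in> B \<Longrightarrow> Good (fac(m := g'))"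
    and AB: "A \<subseteq> BM" "B \<subseteq> BM"
    and base: "\<And>fac. (\<And>n. n < N \<Longrightarrow> fac n \<in> A) \<Longrightarrow> Good fac"
    and fac: "\<And>n. n < N \<Longrightarrow> fac n \<in> B"
  shows "Good fac"
proof -
  have "\<forall>fac. (\<forall>n<N. (n < m \<longrightarrow> fac n \<in> B) \<and> (m \<le> n \<longrightarrow> fac n \<in> A)) \<longrightarrow> Good fac" for m
  proof (induction m)
    case 0
    then show ?case using base by auto
  next
    case (Suc m)
    show ?case
    proof (intro allI impI)
      fix fac assume H: "\<forall>n<N. (n < Suc m \<longrightarrow> fac n \<in> B) \<and> (Suc m \<le> n \<longrightarrow> fac n \<in> A)"
      show "Good fac"
      proof (cases "m < N")
        case False
        then show ?thesis using Suc.IH H by auto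
      next
        case True
        have "Good (fac(m := fac m))"
        proof (rule rep[OF True])
          show "fac n \<in> BM" if "n < N" for n using H that AB by (cases "n < Suc m") auto
          show "fac m \<in> B" using H True by auto
          fix g assume g: "g \<in> A"
          show "Good (fac(m := g))"
            using Suc.IH[rule_format, of "fac(m := g)"] H g by auto
        qed
        then show ?thesis by simp
      qed
    qed
  qed
  from this[of N] show ?thesis using fac by auto
qed

lemma C0_bounded:
  fixes X :: "(real ^ 'd) set"
  assumes "closed X" "f \<in> C0_on X"
  shows "\<exists>B. \<forall>x\<in>X. \<bar>f x\<bar> \<le> B"
proof -
  from assms(2) have cont: "continuous_on X f" and "\<exists>K. compact K \<and> (\<forall>x\<in>X - K. \<bar>f x\<bar> < 1)"
    unfolding C0_on_def by auto
  then obtain K where K: "compact K" "\<forall>x\<in>X - K. \<bar>f x\<bar> < 1" by blast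
  have "compact (X \<inter> K)" using assms(1) K(1) by (rule closed_Int_compact)
  moreover have "continuous_on (X \<inter> K) f" using cont by (rule continuous_on_subset) auto
  ultimately have "compact (f ` (X \<inter> K))" by (rule compact_continuous_image[rotated])
  then have "bounded (f ` (X \<inter> K))" by (rule compact_imp_bounded)
  then obtain a where a: "\<forall>y\<in>f ` (X \<inter> K). \<bar>y\<bar> \<le> a" unfolding bounded_real by blast
  show ?thesis
  proof (intro exI[of _ "max a 1"] ballI)
    fix x assume "x \<in> X"
    then show "\<bar>f x\<bar> \<le> max a 1" using a K(2) by (cases "x \<in> K") force+
  qed
qed

lemma ubt:
  fixes \<phi> :: "'b \<Rightarrow> 'h::{real_inner, complete_space}"
  assumes bd: "\<And>h. \<exists>B. \<forall>x\<in>X. \<bar>inner h (\<phi> x)\<bar> \<le> B"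
  shows "\<exists>C. \<forall>x\<in>X. norm (\<phi> x) \<le> C"
proof -
  define F where "F n = {h. \<forall>x\<in>X. \<bar>inner h (\<phi> x)\<bar> \<le> real n}" for n :: nat
  have clF: "closed (F n)" for n
  proof -
    have "F n = (\<Inter>x\<in>X. {h. \<bar>inner h (\<phi> x)\<bar> \<le> real n})" unfolding F_def by auto
    also have "closed \<dots>"
      by (intro closed_INT ballI closed_Collect_le continuous_intros)
    finally show ?thesis .
  qed
  have UF0: "h \<in> \<Union>(range F)" for h
  proof -
    obtain B where B: "\<forall>x\<in>X. \<bar>inner h (\<phi> x)\<bar> \<le> B" using bd by blast
    obtain n :: nat where "B \<le> real n" using real_arch_simple by blast
    then have "h \<in> F n" using B unfolding F_def by force
    then show "h \<in> \<Union>(range F)" by blast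
  qed
  then have UF: "\<Union>(range F) = UNIV" by auto
  have "\<exists>n. euclidean interior_of (F n) \<noteq> {}"
  proof (rule ccontr)
    assume "\<nexists>n. euclidean interior_of F n \<noteq> {}"
    then have "euclidean interior_of \<Union>(range F) = {}"
      using clF by (intro Baire_category_alt) (auto simp: completely_metrizable_space_euclidean)
    then show False using UF by simp
  qed
  then obtain n h0 where h0: "h0 \<in> euclidean interior_of (F n)" by blast
  have "open (euclidean interior_of (F n))" by (metis open_openin openin_interior_of)
  then obtain r where r: "r > 0" "ball h0 r \<subseteq> euclidean interior_of (F n)"
    using h0 open_contains_ball by blast
  have rF: "ball h0 r \<subseteq> F n" using r(2) interior_of_subset[of euclidean "F n"] by (rule order_trans)
  show ?thesis
  proof (intro exI[of _ "4 * real n / r"] ballI)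
    fix x assume x: "x \<in> X"
    show "norm (\<phi> x) \<le> 4 * real n / r"
    proof (cases "\<phi> x = 0")
      case True then show ?thesis using r by simp
    next
      case False
      define u where "u = (r / 2 / norm (\<phi> x)) *\<^sub>R \<phi> x"
      have nu: "norm u = r / 2" unfolding u_def using False r by simp
      then have "h0 + u \<in> ball h0 r" using r by (simp add: dist_norm)
      then have "\<bar>inner (h0 + u) (\<phi> x)\<bar> \<le> real n" using rF x unfolding F_def by blast
      moreover have "h0 \<in> ball h0 r" using r by simp
      then have "\<bar>inner h0 (\<phi> x)\<bar> \<le> real n" using rF x unfolding F_def by blast
      moreover have "inner u (\<phi> x) = r / 2 * norm (\<phi> x)"
        unfolding u_def using False by (simp add: power2_norm_eq_inner[symmetric] power2_eq_square)
      ultimately have "r / 2 * norm (\<phi> x) \<le> 2 * real n"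
        by (simp add: inner_add_left)
      then show ?thesis using r by (simp add: field_simps)
    qed
  qed
qed

lemma two_half_ennreal: "(2::ennreal) * ennreal (1/2) = 1"
  by (metis divide_inverse divide_self_if ennreal_1 ennreal_mult'
    ennreal_numeral inverse_eq_divide zero_le_numeral zero_neq_numeral)

lemma mixture:
  assumes P: "prob_space \<mu>" and Q: "prob_space \<nu>" and s: "sets \<nu> = sets \<mu>"
  obtains \<pi> where "prob_space \<pi>" "sets \<pi> = sets \<mu>" "\<mu> \<le> scale_measure 2 \<pi>" "\<nu> \<le> scale_measure 2 \<pi>"
proof -
  have sp: "space \<nu> = space \<mu>" using s by (rule sets_eq_imp_space_eq)
  define \<pi>0 where "\<pi>0 = measure_of (space \<mu>) (sets \<mu>) (\<lambda>A. emeasure \<mu> A + emeasure \<nu> A)"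
  have ca: "countably_additive (sets \<mu>) (\<lambda>A. emeasure \<mu> A + emeasure \<nu> A)"
    unfolding countably_additive_def
  proof safe
    fix A :: "nat \<Rightarrow> _" assume A: "range A \<subseteq> sets \<mu>" "disjoint_family A" "\<Union>(range A) \<in> sets \<mu>"
    have "(\<Sum>i. emeasure \<mu> (A i)) = emeasure \<mu> (\<Union>(range A))"
      using A by (intro suminf_emeasure) auto
    moreover have "(\<Sum>i. emeasure \<nu> (A i)) = emeasure \<nu> (\<Union>(range A))"
      using A s by (intro suminf_emeasure) auto
    ultimately show "(\<Sum>i. emeasure \<mu> (A i) + emeasure \<nu> (A i)) = emeasure \<mu> (\<Union>(range A)) + emeasure \<nu> (\<Union>(range A))"
      by (simp add: suminf_add[symmetric] summableI)
  qed
  have e0: "emeasure \<pi>0 A = emeasure \<mu> A + emeasure \<nu> A" if "A \<in> sets \<mu>" for A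
    unfolding \<pi>0_def
    by (rule emeasure_measure_of_sigma[OF sets.sigma_algebra_axioms _ ca that]) (simp add: positive_def)
  have s0: "sets \<pi>0 = sets \<mu>" "space \<pi>0 = space \<mu>" unfolding \<pi>0_def by simp_all
  define \<pi> where "\<pi> = scale_measure (ennreal (1/2)) \<pi>0"
  have "prob_space \<pi>"
  proof
    have "emeasure \<pi> (space \<pi>) = ennreal (1/2) * (emeasure \<mu> (space \<mu>) + emeasure \<nu> (space \<nu>))"
      unfolding \<pi>_def using e0[of "space \<mu>"] s0 sp by (simp add: space_scale_measure)
    also have "\<dots> = 1" using prob_space.emeasure_space_1[OF P] prob_space.emeasure_space_1[OF Q]
      using two_half_ennreal by (simp add: one_add_one mult.commute)
    finally show "emeasure \<pi> (space \<pi>) = 1" .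
  qed
  moreover have sp2: "sets \<pi> = sets \<mu>" unfolding \<pi>_def using s0 by simp
  moreover have sc: "scale_measure 2 \<pi> = \<pi>0"
    unfolding \<pi>_def by (simp only: scale_scale_measure two_half_ennreal scale_measure_1)
  moreover have le1: "emeasure \<mu> A \<le> emeasure \<pi>0 A" for A
  proof (cases "A \<in> sets \<mu>")
    case True then show ?thesis using e0[OF True] by (simp add: add_increasing2)
  next
    case False then show ?thesis by (simp add: emeasure_notin_sets)
  qed
  moreover have le2: "emeasure \<nu> A \<le> emeasure \<pi>0 A" for A
  proof (cases "A \<in> sets \<mu>")
    case True then show ?thesis using e0[OF True] by (simp add: add_increasing)
  next
    case False then show ?thesis using s by (simp add: emeasure_notin_sets)
  qed
  moreover have "\<mu> \<le> \<pi>0"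
    unfolding le_measure_iff using s0 le1 by (auto simp: le_fun_def)
  moreover have "\<nu> \<le> \<pi>0"
    unfolding le_measure_iff using s0 le2 s sp by (auto simp: le_fun_def)
  ultimately show ?thesis using that by simp
qed

lemma int_le_mix:
  fixes f :: "'a \<Rightarrow> real"
  assumes s: "sets \<mu> = sets \<pi>" and le: "\<mu> \<le> scale_measure 2 \<pi>"
    and i1: "integrable \<mu> f" and i2: "integrable \<pi> f" and nn: "\<And>x. x \<in> space \<mu> \<Longrightarrow> 0 \<le> f x"
  shows "integral\<^sup>L \<mu> f \<le> 2 * integral\<^sup>L \<pi> f"
proof -
  have sp: "space \<mu> = space \<pi>" using s by (rule sets_eq_imp_space_eq)
  have m: "f \<in> borel_measurable \<pi>" using i2 by auto
  have "(\<integral>\<^sup>+x. ennreal (f x) \<partial>\<mu>) \<le> (\<integral>\<^sup>+x. ennreal (f x) \<partial>scale_measure 2 \<pi>)"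
    using s le by (intro nn_integral_mono_measure) auto
  also have "\<dots> = 2 * (\<integral>\<^sup>+x. ennreal (f x) \<partial>\<pi>)"
    using m by (intro nn_integral_scale_measure) auto
  moreover have "(\<integral>\<^sup>+x. ennreal (f x) \<partial>\<mu>) = ennreal (integral\<^sup>L \<mu> f)"
    by (rule nn_integral_eq_integral[OF i1]) (use nn in \<open>auto intro!: AE_I2\<close>)
  moreover have "(\<integral>\<^sup>+x. ennreal (f x) \<partial>\<pi>) = ennreal (integral\<^sup>L \<pi> f)"
    by (rule nn_integral_eq_integral[OF i2]) (use nn sp in \<open>auto intro!: AE_I2\<close>)
  ultimately have "ennreal (integral\<^sup>L \<mu> f) \<le> 2 * ennreal (integral\<^sup>L \<pi> f)"
    by simp
  moreover have I0: "0 \<le> integral\<^sup>L \<pi> f" using nn sp by (intro integral_nonneg_AE) auto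
  moreover have "2 * ennreal (integral\<^sup>L \<pi> f) = ennreal (2 * integral\<^sup>L \<pi> f)"
    using I0 by (simp add: ennreal_mult)
  ultimately have "ennreal (integral\<^sup>L \<mu> f) \<le> ennreal (2 * integral\<^sup>L \<pi> f)" by simp
  then show ?thesis using I0 by (simp add: ennreal_le_iff)
qed



lemma bounded_integrable:
  fixes F :: "'a \<Rightarrow> real"
  assumes "prob_space R" "sets R = sets S" "F \<in> borel_measurable S" "\<And>x. x \<in> space S \<Longrightarrow> \<bar>F x\<bar> \<le> B"
  shows "integrable R F"
proof -
  have fm: "finite_measure R" using assms(1) unfolding prob_space_def by simp
  have sp: "space R = space S" using assms(2) by (rule sets_eq_imp_space_eq)
  have "measurable R (borel :: real measure) = measurable S borel" by (rule measurable_cong_sets[OF assms(2)]) simp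
  then have m: "F \<in> borel_measurable R" using assms(3) by simp
  have ae: "AE x in R. norm (F x) \<le> B" by (rule AE_I2) (use assms(4) sp in simp)
  show ?thesis by (rule finite_measure.integrable_const_bound[OF fm ae m])
qed

lemma bounded_integral:
  fixes F :: "'a \<Rightarrow> real"
  assumes "prob_space R" "integrable R F" "\<And>x. x \<in> space R \<Longrightarrow> \<bar>F x\<bar> \<le> K"
  shows "\<bar>integral\<^sup>L R F\<bar> \<le> K"
proof -
  interpret prob_space R by fact
  have "\<bar>integral\<^sup>L R F\<bar> \<le> (\<integral>x. \<bar>F x\<bar> \<partial>R)" by (rule integral_abs_bound)
  also have "\<dots> \<le> (\<integral>x. K \<partial>R)"
    using assms by (intro integral_mono) auto
  also have "\<dots> = K" by (simp add: prob_space)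
  finally show ?thesis .
qed

lemma real_eps_zero:
  fixes D B :: real
  assumes B: "0 \<le> B" and H: "\<And>\<delta> \<epsilon>. \<delta> > 0 \<Longrightarrow> \<epsilon> > 0 \<Longrightarrow> \<bar>D\<bar> \<le> B * (2 * \<epsilon> / \<delta> + \<delta>)"
  shows "D = 0"
proof (rule ccontr)
  assume "D \<noteq> 0"
  then have d: "\<bar>D\<bar> > 0" by simp
  define K where "K = B + 1"
  have K: "K \<ge> 1" unfolding K_def using B by simp
  define \<delta> where "\<delta> = \<bar>D\<bar> / (4 * K)"
  have \<delta>: "\<delta> > 0" unfolding \<delta>_def using d K by simp
  have D4: "\<bar>D\<bar> = 4 * K * \<delta>" unfolding \<delta>_def using K by simp
  have \<epsilon>: "\<delta> * \<delta> / (4 * K) > 0" using \<delta> K by simp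
  have e: "2 * (\<delta> * \<delta> / (4 * K)) / \<delta> = \<delta> / (2 * K)" using \<delta> K by (simp add: field_simps)
  have e2: "\<delta> / (2 * K) \<le> \<delta>" using \<delta> K by (simp add: field_simps)
  have "\<bar>D\<bar> \<le> B * (2 * (\<delta> * \<delta> / (4 * K)) / \<delta> + \<delta>)" using H[OF \<delta> \<epsilon>] .
  also have "\<dots> \<le> B * (2 * \<delta>)" unfolding e using e2 B by (intro mult_left_mono) auto
  also have "\<dots> < 4 * K * \<delta>"
  proof -
    have q: "4 * K * \<delta> - B * (2 * \<delta>) = 2 * (B * \<delta>) + 4 * \<delta>" by (simp add: K_def algebra_simps)
    have "0 \<le> B * \<delta>" using B \<delta> by simp
    then show ?thesis using q \<delta> by linarith
  qed
  finally show False using D4 by simp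
qed

locale tctx =
  fixes X :: "(real ^ 'd) set" and \<phi> :: "real ^ 'd \<Rightarrow> 'h::{real_inner, complete_space}" and N :: nat
  assumes clX: "closed X" and Dh: "\<forall>f\<in>rkhs \<phi>. f \<in> C0_on X"
    and Eh: "\<forall>\<pi>. prob_space \<pi> \<and> sets \<pi> = sets (restrict_space borel X) \<longrightarrow> dense_in_L2 (rkhs \<phi>) \<pi>"
begin

abbreviation "M \<equiv> restrict_space borel X"
abbreviation "S \<equiv> prod_space X N"
definition fh :: "'h \<Rightarrow> real ^ 'd \<Rightarrow> real" where "fh h = (\<lambda>z. inner h (\<phi> z))"
definition BM :: "(real ^ 'd \<Rightarrow> real) set" where
  "BM = {g. g \<in> borel_measurable M \<and> (\<exists>B. \<forall>z\<in>X. \<bar>g z\<bar> \<le> B)}"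

lemma space_M: "space M = X" by (simp add: space_restrict_space)

lemma S_def': "S = PiM {..<N} (\<lambda>_. M)" by (simp add: prod_space_def)

lemma space_S: "space S = PiE {..<N} (\<lambda>_. X)" by (simp add: prod_space_def space_PiM space_M)

lemma fh_rkhs: "fh h \<in> rkhs \<phi>" unfolding rkhs_def fh_def by auto

lemma fh_C0: "fh h \<in> C0_on X" using Dh fh_rkhs by blast

lemma fh_bounded: "\<exists>B. \<forall>z\<in>X. \<bar>fh h z\<bar> \<le> B" using C0_bounded[OF clX fh_C0] .

lemma fh_meas: "fh h \<in> borel_measurable M"
  using fh_C0 unfolding C0_on_def by (auto intro: borel_measurable_continuous_on_restrict)

lemma fh_BM: "fh h \<in> BM" unfolding BM_def using fh_meas fh_bounded by auto

lemma ind_BM: "E \<in> sets M \<Longrightarrow> indicator E \<in> BM"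
  unfolding BM_def by (auto intro!: exI[of _ 1] simp: indicator_def)

lemma phi_bound: "\<exists>C. \<forall>z\<in>X. norm (\<phi> z) \<le> C"
proof -
  have "\<And>h. \<exists>B. \<forall>x\<in>X. \<bar>inner h (\<phi> x)\<bar> \<le> B" using fh_bounded unfolding fh_def by blast
  then show ?thesis by (rule ubt)
qed

lemma fh_add: "fh (a + b) z = fh a z + fh b z" by (simp add: fh_def inner_add_left)
lemma fh_scale: "fh (c *\<^sub>R a) z = c * fh a z" by (simp add: fh_def)

lemma prodBM:
  assumes I: "I \<subseteq> {..<N}" and fac: "\<And>n. n \<in> I \<Longrightarrow> fac n \<in> BM"
  shows "(\<lambda>x. \<Prod>n\<in>I. fac n (x n)) \<in> borel_measurable S"
    and "\<exists>B\<ge>0. \<forall>x\<in>space S. \<bar>\<Prod>n\<in>I. fac n (x n)\<bar> \<le> B"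
proof -
  show "(\<lambda>x. \<Prod>n\<in>I. fac n (x n)) \<in> borel_measurable S"
  proof (intro borel_measurable_prod)
    fix n assume n: "n \<in> I"
    have "(\<lambda>x. x n) \<in> measurable S M" unfolding S_def' using n I by (intro measurable_component_singleton) auto
    moreover have "fac n \<in> borel_measurable M" using fac[OF n] BM_def by auto
    ultimately show "(\<lambda>x. fac n (x n)) \<in> borel_measurable S" by (rule measurable_compose)
  qed
  have "\<forall>n\<in>I. \<exists>B. \<forall>z\<in>X. \<bar>fac n z\<bar> \<le> B" using fac BM_def by auto
  then obtain Bf where Bf: "\<forall>n\<in>I. \<forall>z\<in>X. \<bar>fac n z\<bar> \<le> Bf n" by (auto dest!: bchoice)
  show "\<exists>B\<ge>0. \<forall>x\<in>space S. \<bar>\<Prod>n\<in>I. fac n (x n)\<bar> \<le> B"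
  proof (intro exI[of _ "max 0 (\<Prod>n\<in>I. Bf n)"] conjI ballI)
    fix x assume x: "x \<in> space S"
    have xn: "x n \<in> X" if "n \<in> I" for n using PiE_mem[OF x[unfolded space_S], of n] that I by auto
    have "\<bar>\<Prod>n\<in>I. fac n (x n)\<bar> = (\<Prod>n\<in>I. \<bar>fac n (x n)\<bar>)" by (simp add: abs_prod)
    also have "\<dots> \<le> (\<Prod>n\<in>I. Bf n)" using Bf xn by (intro prod_mono) auto
    finally show "\<bar>\<Prod>n\<in>I. fac n (x n)\<bar> \<le> max 0 (\<Prod>n\<in>I. Bf n)" by simp
  qed simp
qed

end



locale pq = tctx X \<phi> N for X :: "(real ^ 'd) set" and \<phi> :: "real ^ 'd \<Rightarrow> 'h::{real_inner, complete_space}" and N :: nat +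
  fixes P Q :: "(nat \<Rightarrow> real ^ 'd) measure"
  assumes P: "prob_space P" and Q: "prob_space Q" and sP: "sets P = sets S" and sQ: "sets Q = sets S"
begin

definition Good :: "(nat \<Rightarrow> real ^ 'd \<Rightarrow> real) \<Rightarrow> bool" where
  "Good fac \<longleftrightarrow> (\<integral>x. (\<Prod>n<N. fac n (x n)) \<partial>P) = (\<integral>x. (\<Prod>n<N. fac n (x n)) \<partial>Q)"

lemma spP: "space P = space S" using sP by (rule sets_eq_imp_space_eq)
lemma spQ: "space Q = space S" using sQ by (rule sets_eq_imp_space_eq)

lemma xmX: "x \<in> space S \<Longrightarrow> m < N \<Longrightarrow> x m \<in> X"
  using PiE_mem[of x "{..<N}" "\<lambda>_. X" m] by (simp add: space_S)

lemma coord_meas: "m < N \<Longrightarrow> (\<lambda>x. x m) \<in> measurable S M"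
  unfolding S_def' by (intro measurable_component_singleton) auto

lemma split_prod:
  assumes m: "m < N"
  shows "(\<Prod>n<N. (fac(m:=g)) n (x n)) = g (x m) * (\<Prod>n\<in>{..<N}-{m}. fac n (x n))"
proof -
  have "(\<Prod>n<N. (fac(m:=g)) n (x n)) = (fac(m:=g)) m (x m) * (\<Prod>n\<in>{..<N}-{m}. (fac(m:=g)) n (x n))"
    using m by (intro prod.remove) auto
  also have "(\<Prod>n\<in>{..<N}-{m}. (fac(m:=g)) n (x n)) = (\<Prod>n\<in>{..<N}-{m}. fac n (x n))"
    by (rule prod.cong) auto
  finally show ?thesis by simp
qed

lemma Good_cong:
  assumes "\<And>n. n < N \<Longrightarrow> fac n = fac' n" shows "Good fac \<longleftrightarrow> Good fac'"
proof -
  have "(\<Prod>n<N. fac n (x n)) = (\<Prod>n<N. fac' n (x n))" for x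
    using assms by (intro prod.cong) auto
  then show ?thesis unfolding Good_def by simp
qed

lemma phi_bound0: obtains C where "C \<ge> 0" "\<And>z. z \<in> X \<Longrightarrow> norm (\<phi> z) \<le> C"
proof -
  obtain C where "\<forall>z\<in>X. norm (\<phi> z) \<le> C" using phi_bound by blast
  then show ?thesis using that[of "max C 0"] by fastforce
qed

lemma fh_bound_norm: "norm (\<phi> z) \<le> C \<Longrightarrow> \<bar>fh h z\<bar> \<le> norm h * C"
  unfolding fh_def using Cauchy_Schwarz_ineq2[of h "\<phi> z"]
  by (meson mult_left_mono norm_ge_zero order_trans)

lemma G_facts:
  assumes m: "m < N" and fac: "\<And>n. n < N \<Longrightarrow> fac n \<in> BM"
  obtains BG where "BG \<ge> 0" "(\<lambda>x. \<Prod>n\<in>{..<N}-{m}. fac n (x n)) \<in> borel_measurable S"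
    "\<And>x. x \<in> space S \<Longrightarrow> \<bar>\<Prod>n\<in>{..<N}-{m}. fac n (x n)\<bar> \<le> BG"
proof -
  have I: "{..<N}-{m} \<subseteq> {..<N}" by auto
  have f: "\<And>n. n \<in> {..<N}-{m} \<Longrightarrow> fac n \<in> BM" using fac by auto
  show ?thesis using prodBM[of "{..<N}-{m}" fac, OF I f] that by blast
qed

lemma rep1:
  assumes m: "m < N" and fac: "\<And>n. n < N \<Longrightarrow> fac n \<in> BM"
    and H: "\<And>g. g \<in> {fh (\<phi> w) |w. w \<in> X} \<Longrightarrow> Good (fac(m:=g))"
  shows "Good (fac(m := fh h0))"
proof -
  define G where "G x = (\<Prod>n\<in>{..<N}-{m}. fac n (x n))" for x
  obtain BG where BG: "BG \<ge> 0" "G \<in> borel_measurable S" "\<And>x. x \<in> space S \<Longrightarrow> \<bar>G x\<bar> \<le> BG"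
    using G_facts[of m fac, OF m fac] unfolding G_def[abs_def] by blast
  obtain C where C: "C \<ge> 0" "\<And>z. z \<in> X \<Longrightarrow> norm (\<phi> z) \<le> C" using phi_bound0 by blast
  have Gi: "Good (fac(m:=g)) \<longleftrightarrow> (\<integral>x. g (x m) * G x \<partial>P) = (\<integral>x. g (x m) * G x \<partial>Q)" for g
    unfolding Good_def G_def split_prod[OF m] by (rule refl)
  have meas: "(\<lambda>x. fh h (x m) * G x) \<in> borel_measurable S" for h
    using measurable_compose[OF coord_meas[OF m] fh_meas] BG(2) by measurable
  have pb: "\<bar>fh h (x m) * G x\<bar> \<le> norm h * C * BG" if "x \<in> space S" for x h
  proof -
    have "\<bar>fh h (x m)\<bar> \<le> norm h * C" using fh_bound_norm C(2) xmX[OF that m] by blast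
    then show ?thesis unfolding abs_mult using BG(3)[OF that] C BG(1)
      by (intro mult_mono) auto
  qed
  have intP: "integrable P (\<lambda>x. fh h (x m) * G x)" for h
    using bounded_integrable[OF P sP meas pb] .
  have intQ: "integrable Q (\<lambda>x. fh h (x m) * G x)" for h
    using bounded_integrable[OF Q sQ meas pb] .
  define L where "L h = (\<integral>x. fh h (x m) * G x \<partial>P) - (\<integral>x. fh h (x m) * G x \<partial>Q)" for h
  have "L h0 = 0"
  proof (rule ext_zero[where L=L and C="2 * C * BG" and X=X and \<phi>=\<phi>])
    fix a b
    show "L (a + b) = L a + L b"
      unfolding L_def fh_add distrib_right
      using intP intQ by (simp add: Bochner_Integration.integral_add)
  next
    fix c a
    show "L (c *\<^sub>R a) = c * L a"
      unfolding L_def fh_scale by (simp add: mult.assoc right_diff_distrib)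
  next
    fix a
    have "\<bar>\<integral>x. fh a (x m) * G x \<partial>P\<bar> \<le> norm a * C * BG"
      by (rule bounded_integral[OF P intP]) (use pb spP in auto)
    moreover have "\<bar>\<integral>x. fh a (x m) * G x \<partial>Q\<bar> \<le> norm a * C * BG"
      by (rule bounded_integral[OF Q intQ]) (use pb spQ in auto)
    ultimately show "\<bar>L a\<bar> \<le> 2 * C * BG * norm a" unfolding L_def by (simp add: algebra_simps)
  next
    fix z assume z: "z \<in> X"
    then have "Good (fac(m := fh (\<phi> z)))" using H by blast
    then show "L (\<phi> z) = 0" unfolding L_def Gi by simp
  next
    fix q assume q: "\<And>z. z \<in> X \<Longrightarrow> inner q (\<phi> z) = 0"
    have z: "fh q (x m) * G x = 0" if "x \<in> space S" for x
      using q[OF xmX[OF that m]] by (simp add: fh_def)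
    have "(\<integral>x. fh q (x m) * G x \<partial>P) = (\<integral>x. 0 \<partial>P)"
      by (rule Bochner_Integration.integral_cong) (use z spP in auto)
    moreover have "(\<integral>x. fh q (x m) * G x \<partial>Q) = (\<integral>x. 0 \<partial>Q)"
      by (rule Bochner_Integration.integral_cong) (use z spQ in auto)
    ultimately show "L q = 0" unfolding L_def by simp
  qed
  then show ?thesis unfolding Gi L_def by simp
qed


lemma absle_sq: fixes t \<delta> :: real assumes "\<delta> > 0" shows "\<bar>t\<bar> \<le> t^2 / (2*\<delta>) + \<delta>/2"
proof -
  have "0 \<le> (\<bar>t\<bar> - \<delta>)^2" by simp
  then have "2 * \<delta> * \<bar>t\<bar> \<le> t^2 + \<delta>^2" by (simp add: power2_eq_square algebra_simps)
  then show ?thesis using assms by (simp add: field_simps power2_eq_square)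
qed

lemma rep2:
  assumes m: "m < N" and fac: "\<And>n. n < N \<Longrightarrow> fac n \<in> BM"
    and H: "\<And>g. g \<in> range fh \<Longrightarrow> Good (fac(m:=g))"
    and E: "E \<in> sets M"
  shows "Good (fac(m := indicator E))"
proof -
  define G where "G x = (\<Prod>n\<in>{..<N}-{m}. fac n (x n))" for x
  obtain BG where BG: "BG \<ge> 0" "G \<in> borel_measurable S" "\<And>x. x \<in> space S \<Longrightarrow> \<bar>G x\<bar> \<le> BG"
    using G_facts[of m fac, OF m fac] unfolding G_def[abs_def] by blast
  have Gi: "Good (fac(m:=g)) \<longleftrightarrow> (\<integral>x. g (x m) * G x \<partial>P) = (\<integral>x. g (x m) * G x \<partial>Q)" for g
    unfolding Good_def G_def split_prod[OF m] by (rule refl)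
  have cm: "(\<lambda>x. x m) \<in> measurable S M" using coord_meas[OF m] .
  have cmP: "(\<lambda>x. x m) \<in> measurable P M" using cm measurable_cong_sets[of P S M M] sP by simp
  have cmQ: "(\<lambda>x. x m) \<in> measurable Q M" using cm measurable_cong_sets[of Q S M M] sQ by simp
  define \<mu> where "\<mu> = distr P M (\<lambda>x. x m)"
  define \<nu> where "\<nu> = distr Q M (\<lambda>x. x m)"
  have p\<mu>: "prob_space \<mu>" unfolding \<mu>_def by (rule prob_space.prob_space_distr[OF P cmP])
  have p\<nu>: "prob_space \<nu>" unfolding \<nu>_def by (rule prob_space.prob_space_distr[OF Q cmQ])
  have s\<mu>: "sets \<mu> = sets M" unfolding \<mu>_def by simp
  have s\<nu>: "sets \<nu> = sets \<mu>" unfolding \<mu>_def \<nu>_def by simp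
  obtain \<pi> where \<pi>: "prob_space \<pi>" "sets \<pi> = sets \<mu>" "\<mu> \<le> scale_measure 2 \<pi>" "\<nu> \<le> scale_measure 2 \<pi>"
    using mixture[OF p\<mu> p\<nu> s\<nu>] by blast
  have s\<pi>: "sets \<pi> = sets M" using \<pi>(2) s\<mu> by simp
  have dense: "dense_in_L2 (rkhs \<phi>) \<pi>" using Eh \<pi>(1) s\<pi> by blast
  have indm: "(indicator E :: _ \<Rightarrow> real) \<in> borel_measurable \<pi>" using E s\<pi> by (intro borel_measurable_indicator) simp
  have indsq: "integrable \<pi> (\<lambda>x. (indicator E x :: real)\<^sup>2)"
  proof (rule bounded_integrable[OF \<pi>(1) s\<pi>, where B=1])
    show "(\<lambda>x. (indicator E x :: real)\<^sup>2) \<in> borel_measurable M" using E by measurable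
  qed (auto simp: indicator_def)
  define D where "D = (\<integral>x. indicator E (x m) * G x \<partial>P) - (\<integral>x. indicator E (x m) * G x \<partial>Q)"
  have "\<bar>D\<bar> \<le> BG * (2 * \<epsilon> / \<delta> + \<delta>)" if \<delta>: "\<delta> > 0" and \<epsilon>: "\<epsilon> > 0" for \<delta> \<epsilon>
  proof -
    obtain g where g: "g \<in> rkhs \<phi>" "(\<integral>x. (indicator E x - g x)\<^sup>2 \<partial>\<pi>) < \<epsilon>"
      using dense indm indsq \<epsilon> unfolding dense_in_L2_def by blast
    obtain h where gh: "g = fh h" using g(1) unfolding rkhs_def fh_def by blast
    define t where "t z = indicator E z - fh h z" for z
    obtain Bh where Bh: "\<forall>z\<in>X. \<bar>fh h z\<bar> \<le> Bh" using fh_bounded by blast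
    have tm: "t \<in> borel_measurable M" unfolding t_def using E fh_meas by measurable
    have t2m: "(\<lambda>z. (t z)\<^sup>2) \<in> borel_measurable M" using tm by measurable
    have t2b: "\<bar>(t z)\<^sup>2\<bar> \<le> (1 + Bh)^2" if "z \<in> space M" for z
    proof -
      have "\<bar>t z\<bar> \<le> 1 + Bh" using Bh that space_M unfolding t_def
        by (auto simp: indicator_def intro: order_trans[OF abs_triangle_ineq4])
      then show ?thesis by (metis abs_ge_zero power2_abs power_mono abs_power2)
    qed
    have it2: "integrable R (\<lambda>z. (t z)\<^sup>2)" if "prob_space R" "sets R = sets M" for R
      using bounded_integrable[OF that t2m t2b] by simp
    have t2nn: "0 \<le> (t z)\<^sup>2" for z by simp
    have "(\<integral>x. (t x)\<^sup>2 \<partial>\<pi>) < \<epsilon>" using g(2) unfolding gh t_def .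
    moreover have "(\<integral>x. (t x)\<^sup>2 \<partial>\<mu>) \<le> 2 * (\<integral>x. (t x)\<^sup>2 \<partial>\<pi>)"
      using \<pi>(2) by (intro int_le_mix[OF _ \<pi>(3) it2[OF p\<mu> s\<mu>] it2[OF \<pi>(1) s\<pi>]]) auto
    moreover have "(\<integral>x. (t x)\<^sup>2 \<partial>\<nu>) \<le> 2 * (\<integral>x. (t x)\<^sup>2 \<partial>\<pi>)"
      using \<pi>(2) s\<nu> s\<mu> by (intro int_le_mix[OF _ \<pi>(4) it2[OF p\<nu>] it2[OF \<pi>(1) s\<pi>]]) auto
    moreover have IPd: "(\<integral>x. (t (x m))\<^sup>2 \<partial>P) = (\<integral>x. (t x)\<^sup>2 \<partial>\<mu>)"
      unfolding \<mu>_def by (rule integral_distr[OF cmP t2m, symmetric])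
    moreover have IQd: "(\<integral>x. (t (x m))\<^sup>2 \<partial>Q) = (\<integral>x. (t x)\<^sup>2 \<partial>\<nu>)"
      unfolding \<nu>_def by (rule integral_distr[OF cmQ t2m, symmetric])
    ultimately have IPQ: "(\<integral>x. (t (x m))\<^sup>2 \<partial>P) + (\<integral>x. (t (x m))\<^sup>2 \<partial>Q) \<le> 4 * \<epsilon>" by linarith
    have tmS: "(\<lambda>x. t (x m)) \<in> borel_measurable S" using measurable_compose[OF cm tm] .
    have tbS: "\<bar>t (x m)\<bar> \<le> 1 + Bh" if "x \<in> space S" for x
      using Bh xmX[OF that m] unfolding t_def
      by (auto simp: indicator_def intro: order_trans[OF abs_triangle_ineq4])
    have tGi: "integrable R (\<lambda>x. t (x m) * G x)" if "prob_space R" "sets R = sets S" for R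
    proof (rule bounded_integrable[OF that, where B="(1 + Bh) * BG"])
      show "(\<lambda>x. t (x m) * G x) \<in> borel_measurable S" using tmS BG(2) by measurable
      fix x assume x: "x \<in> space S"
      show "\<bar>t (x m) * G x\<bar> \<le> (1 + Bh) * BG" unfolding abs_mult
        using tbS[OF x] BG(3)[OF x] by (intro mult_mono) auto
    qed
    have fGi: "integrable R (\<lambda>x. fh h (x m) * G x)" if "prob_space R" "sets R = sets S" for R
    proof (rule bounded_integrable[OF that, where B="Bh * BG"])
      show "(\<lambda>x. fh h (x m) * G x) \<in> borel_measurable S"
        using measurable_compose[OF cm fh_meas] BG(2) by measurable
      fix x assume x: "x \<in> space S"
      show "\<bar>fh h (x m) * G x\<bar> \<le> Bh * BG" unfolding abs_mult
        using Bh xmX[OF x m] BG(3)[OF x] by (intro mult_mono) auto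
    qed
    have bnd: "\<bar>\<integral>x. t (x m) * G x \<partial>R\<bar> \<le> BG / (2*\<delta>) * (\<integral>x. (t (x m))\<^sup>2 \<partial>R) + BG * \<delta> / 2"
      if R: "prob_space R" "sets R = sets S" for R
    proof -
      have spR: "space R = space S" using R(2) by (rule sets_eq_imp_space_eq)
      have sqi: "integrable R (\<lambda>x. (t (x m))\<^sup>2)"
      proof (rule bounded_integrable[OF R, where B="(1 + Bh)^2"])
        show "(\<lambda>x. (t (x m))\<^sup>2) \<in> borel_measurable S" using tmS by measurable
        fix x assume x: "x \<in> space S"
        have "\<bar>t (x m)\<bar> \<le> 1 + Bh" using tbS[OF x] .
        then show "\<bar>(t (x m))\<^sup>2\<bar> \<le> (1 + Bh)^2" by (metis abs_ge_zero power2_abs power_mono abs_power2)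
      qed
      have pw: "\<bar>t (x m) * G x\<bar> \<le> BG / (2*\<delta>) * (t (x m))\<^sup>2 + BG * \<delta> / 2" if x: "x \<in> space R" for x
      proof -
        have "\<bar>t (x m) * G x\<bar> \<le> \<bar>t (x m)\<bar> * BG" unfolding abs_mult
          using BG(3) x spR by (intro mult_left_mono) auto
        also have "\<dots> \<le> ((t (x m))\<^sup>2 / (2*\<delta>) + \<delta>/2) * BG"
          using absle_sq[OF \<delta>] BG(1) by (intro mult_right_mono) auto
        also have "\<dots> = BG / (2*\<delta>) * (t (x m))\<^sup>2 + BG * \<delta> / 2" by (simp add: field_simps)
        finally show ?thesis .
      qed
      have "\<bar>\<integral>x. t (x m) * G x \<partial>R\<bar> \<le> (\<integral>x. \<bar>t (x m) * G x\<bar> \<partial>R)" by (rule integral_abs_bound)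
      also have "\<dots> \<le> (\<integral>x. BG / (2*\<delta>) * (t (x m))\<^sup>2 + BG * \<delta> / 2 \<partial>R)"
        using pw tGi[OF R] sqi prob_space.finite_measure[OF R(1)]
        by (intro integral_mono) (auto intro!: finite_measure.integrable_const)
      also have "\<dots> = BG / (2*\<delta>) * (\<integral>x. (t (x m))\<^sup>2 \<partial>R) + BG * \<delta> / 2"
        using sqi prob_space.finite_measure[OF R(1)] prob_space.prob_space[OF R(1)]
        by (subst Bochner_Integration.integral_add) (auto intro!: finite_measure.integrable_const)
      finally show ?thesis .
    qed
    have fheq: "(\<integral>x. fh h (x m) * G x \<partial>P) = (\<integral>x. fh h (x m) * G x \<partial>Q)"
      using H[of "fh h"] Gi by auto
    have split: "indicator E (x m) * G x = t (x m) * G x + fh h (x m) * G x" for x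
      unfolding t_def by (simp add: algebra_simps)
    have "D = (\<integral>x. t (x m) * G x \<partial>P) - (\<integral>x. t (x m) * G x \<partial>Q)"
      unfolding D_def split
      using tGi[OF P sP] tGi[OF Q sQ] fGi[OF P sP] fGi[OF Q sQ] fheq
      by (simp add: Bochner_Integration.integral_add)
    then have "\<bar>D\<bar> \<le> \<bar>\<integral>x. t (x m) * G x \<partial>P\<bar> + \<bar>\<integral>x. t (x m) * G x \<partial>Q\<bar>" by linarith
    also have "\<dots> \<le> BG / (2*\<delta>) * ((\<integral>x. (t (x m))\<^sup>2 \<partial>P) + (\<integral>x. (t (x m))\<^sup>2 \<partial>Q)) + BG * \<delta>"
      using bnd[OF P sP] bnd[OF Q sQ] by (simp add: algebra_simps)
    also have "\<dots> \<le> BG / (2*\<delta>) * (4 * \<epsilon>) + BG * \<delta>"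
      using IPQ BG(1) \<delta> by (intro add_right_mono mult_left_mono) auto
    also have "\<dots> = BG * (2 * \<epsilon> / \<delta> + \<delta>)" using \<delta> by (simp add: field_simps)
    finally show ?thesis .
  qed
  then have "D = 0" by (intro real_eps_zero[OF BG(1)]) auto
  then show ?thesis unfolding Gi D_def by simp
qed


lemma prod_ind:
  assumes x: "x \<in> space S"
  shows "(\<Prod>n<N. indicator (E n) (x n) :: real) = indicator (PiE {..<N} E) x"
proof -
  have ext: "x \<in> extensional {..<N}" using x unfolding space_S by (simp add: PiE_def)
  show ?thesis
  proof (cases "\<forall>n<N. x n \<in> E n")
    case True
    then have "x \<in> PiE {..<N} E" using ext by (auto simp: PiE_def Pi_def)
    moreover have "(\<Prod>n<N. indicator (E n) (x n) :: real) = 1" using True by (intro prod.neutral) auto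
    ultimately show ?thesis by simp
  next
    case False
    then obtain k where k: "k < N" "x k \<notin> E k" by blast
    then have "x \<notin> PiE {..<N} E" by (auto simp: PiE_def Pi_def)
    moreover have "(\<Prod>n<N. indicator (E n) (x n) :: real) = 0" using k by (intro prod_zero) (auto intro!: bexI[of _ k])
    ultimately show ?thesis by simp
  qed
qed

lemma PQ_eq:
  assumes base: "\<And>y. y \<in> space S \<Longrightarrow> Good (\<lambda>n. fh (\<phi> (y n)))"
  shows "P = Q"
proof -
  define C1 where "C1 = {fh (\<phi> w) |w. w \<in> X}"
  define C2 where "C2 = range fh"
  define C3 :: "(real ^ 'd \<Rightarrow> real) set" where "C3 = {indicator E |E. E \<in> sets M}"
  have B1: "C1 \<subseteq> BM" "C2 \<subseteq> BM" "C3 \<subseteq> BM" unfolding C1_def C2_def C3_def using fh_BM ind_BM by auto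
  have g1: "Good fac" if fac: "\<And>n. n < N \<Longrightarrow> fac n \<in> C1" for fac
  proof -
    have "\<forall>n. \<exists>w. n < N \<longrightarrow> w \<in> X \<and> fac n = fh (\<phi> w)" using fac unfolding C1_def by blast
    then obtain w where w: "\<And>n. n < N \<Longrightarrow> w n \<in> X \<and> fac n = fh (\<phi> (w n))" by metis
    define y where "y n = (if n < N then w n else undefined)" for n
    have "y \<in> space S" unfolding space_S y_def using w by (auto simp: PiE_def extensional_def)
    then have "Good (\<lambda>n. fh (\<phi> (y n)))" by (rule base)
    moreover have "Good fac \<longleftrightarrow> Good (\<lambda>n. fh (\<phi> (y n)))"
      by (rule Good_cong) (use w y_def in simp)
    ultimately show ?thesis by simp
  qed
  have g2: "Good fac" if fac: "\<And>n. n < N \<Longrightarrow> fac n \<in> C2" for fac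
  proof (rule upgrade[where A=C1 and B=C2 and BM=BM and N=N])
    fix m fac' g' assume m: "m < N" and f: "\<And>n. n < N \<Longrightarrow> fac' n \<in> BM"
      and H: "\<And>g. g \<in> C1 \<Longrightarrow> Good (fac'(m := g))" and g': "g' \<in> C2"
    obtain h0 where "g' = fh h0" using g' C2_def by blast
    then show "Good (fac'(m := g'))" using rep1[of m fac' h0, OF m f] H unfolding C1_def by blast
  qed (use B1 g1 fac in auto)
  have g3: "Good fac" if fac: "\<And>n. n < N \<Longrightarrow> fac n \<in> C3" for fac
  proof (rule upgrade[where A=C2 and B=C3 and BM=BM and N=N])
    fix m fac' g' assume m: "m < N" and f: "\<And>n. n < N \<Longrightarrow> fac' n \<in> BM"
      and H: "\<And>g. g \<in> C2 \<Longrightarrow> Good (fac'(m := g))" and g': "g' \<in> C3"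
    obtain E where "g' = indicator E" "E \<in> sets M" using g' C3_def by blast
    then show "Good (fac'(m := g'))" using rep2[of m fac' E, OF m f] H unfolding C2_def by blast
  qed (use B1 g2 fac in auto)
  have sPi: "sets P = sets (PiM {..<N} (\<lambda>_. M))" "sets Q = sets (PiM {..<N} (\<lambda>_. M))"
    using sP sQ S_def' by auto
  show ?thesis
  proof (rule measure_eqI_PiM_finite[where A="\<lambda>_. space S"])
    show "finite {..<N}" by simp
    show "sets P = PiM {..<N} (\<lambda>_. M)" "sets Q = PiM {..<N} (\<lambda>_. M)" using sPi by auto
  next
    fix E assume E: "\<And>i. i \<in> {..<N} \<Longrightarrow> E i \<in> sets M"
    have "Good (\<lambda>n. indicator (E n))" by (rule g3) (use E C3_def in auto)
    then have eq: "(\<integral>x. indicator (PiE {..<N} E) x \<partial>P) = (\<integral>x. indicator (PiE {..<N} E) x \<partial>Q :: real)"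
      unfolding Good_def
      by (metis (no_types, lifting) Bochner_Integration.integral_cong prod_ind spP spQ)
    have EX: "E i \<subseteq> X" if "i < N" for i using E[of i] that sets.sets_into_space[of "E i" M] space_M by simp
    have sub: "PiE {..<N} E \<subseteq> space S"
      unfolding space_S by (rule PiE_mono) (use EX in auto)
    have "measure P (PiE {..<N} E) = measure Q (PiE {..<N} E)"
      using eq sub spP spQ by (simp add: Int_absorb2)
    then show "emeasure P (PiE {..<N} E) = emeasure Q (PiE {..<N} E)"
      using finite_measure.emeasure_eq_measure[OF prob_space.finite_measure[OF P]] finite_measure.emeasure_eq_measure[OF prob_space.finite_measure[OF Q]] by simp
  next
    have "space S \<in> prod_algebra {..<N} (\<lambda>_. M)"
    proof -
      have "X \<in> sets M" using sets.top[of M] space_M by simp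
      then show ?thesis unfolding space_S using prod_algebraI_finite[of "{..<N}" "\<lambda>_. X" "\<lambda>_. M"] by simp
    qed
    then show "range (\<lambda>_. space S) \<subseteq> prod_algebra {..<N} (\<lambda>_. M)" by auto
    show "(\<Union>i::nat. space S) = space (PiM {..<N} (\<lambda>_. M))" using S_def' by simp
    show "emeasure P (space S) \<noteq> \<infinity>" for i :: nat
      using prob_space.emeasure_space_1[OF P] spP by simp
  qed
qed

end



theorem mainTheorem1:
  fixes X :: "(real ^ 'd) set"
    and \<phi> :: "real ^ 'd \<Rightarrow> 'h::{real_inner, complete_space}"
    and k :: "real ^ 'd \<Rightarrow> real ^ 'd \<Rightarrow> real"
    and N :: nat
    and \<psi> :: "(nat \<Rightarrow> real ^ 'd) \<Rightarrow> 'g::{real_inner, banach, second_countable_topology}"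
  assumes "closed X"
    and "\<forall>x\<in>X. \<forall>y\<in>X. k x y = feature_kernel \<phi> x y"
    and D: "\<forall>f\<in>rkhs \<phi>. f \<in> C0_on X"
    and E: "\<forall>\<pi>. prob_space \<pi> \<and> sets \<pi> = sets (restrict_space borel X) \<longrightarrow> dense_in_L2 (rkhs \<phi>) \<pi>"
    and tensor: "\<forall>x\<in>space (prod_space X N). \<forall>y\<in>space (prod_space X N).
                   inner (\<psi> x) (\<psi> y) = (\<Prod>n<N. k (x n) (y n))"
  shows "characteristic (prod_space X N) \<psi>"
proof -
  have tc: "tctx X \<phi>" using assms(1) D E by unfold_locales auto
  interpret tctx X \<phi> N by (rule tc)
  show ?thesis unfolding characteristic_def
  proof (intro allI impI)
    fix P Q assume H: "prob_space P \<and> prob_space Q \<and> sets P = sets (prod_space X N) \<and>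
      sets Q = sets (prod_space X N) \<and> mean_embedding P \<psi> = mean_embedding Q \<psi>"
    have H1: "prob_space P" "prob_space Q" "sets P = sets (prod_space X N)" "sets Q = sets (prod_space X N)"
      "mean_embedding P \<psi> = mean_embedding Q \<psi>" using H by blast+
    interpret pq X \<phi> N P Q using tc H1(1-4) unfolding pq_def pq_axioms_def by blast
    have K: "inner (\<psi> x) (\<psi> y) = (\<Prod>n<N. fh (\<phi> (y n)) (x n))" if x: "x \<in> space S" and y: "y \<in> space S" for x y
    proof -
      have "inner (\<psi> x) (\<psi> y) = (\<Prod>n<N. k (x n) (y n))" using tensor x y by blast
      also have "\<dots> = (\<Prod>n<N. fh (\<phi> (y n)) (x n))"
      proof (rule prod.cong)
        fix n assume "n \<in> {..<N}"
        then have "x n \<in> X" "y n \<in> X" using xmX x y by auto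
        then show "k (x n) (y n) = fh (\<phi> (y n)) (x n)"
          using assms(2) by (simp add: feature_kernel_def fh_def inner_commute)
      qed simp
      finally show ?thesis .
    qed
    have my: "(\<lambda>x. inner (\<psi> x) (\<psi> y)) \<in> borel_measurable S" if y: "y \<in> space S" for y
    proof -
      have "(\<lambda>x. \<Prod>n<N. fh (\<phi> (y n)) (x n)) \<in> borel_measurable S"
        by (rule prodBM(1)) (auto intro: fh_BM)
      then show ?thesis using K[OF _ y] by (subst measurable_cong[where g="\<lambda>x. \<Prod>n<N. fh (\<phi> (y n)) (x n)"]) auto
    qed
    have wm: "(\<lambda>x. inner (\<psi> x) c) \<in> borel_measurable S" for c
      by (rule weak_meas_span) (rule my)
    have \<psi>m: "\<psi> \<in> borel_measurable S" by (rule weak_to_borel) (rule wm)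
    obtain C where C: "C \<ge> 0" "\<And>z. z \<in> X \<Longrightarrow> norm (\<phi> z) \<le> C" using phi_bound0 by blast
    have nb: "norm (\<psi> x) \<le> 1 + (C^2)^N" if x: "x \<in> space S" for x
    proof -
      have "norm (\<psi> x)^2 = inner (\<psi> x) (\<psi> x)" by (simp add: power2_norm_eq_inner)
      also have "\<dots> = (\<Prod>n<N. fh (\<phi> (x n)) (x n))" using K[OF x x] .
      also have "\<dots> = (\<Prod>n<N. norm (\<phi> (x n))^2)" by (simp add: fh_def power2_norm_eq_inner)
      also have "\<dots> \<le> (\<Prod>n<N. C^2)"
        using C xmX[OF x] by (intro prod_mono) (auto intro!: power_mono)
      also have "\<dots> = (C^2)^N" by simp
      finally have n2: "norm (\<psi> x)^2 \<le> (C^2)^N" .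
      have aux: "t \<le> 1 + t^2" for t :: real
      proof -
        have "0 \<le> (t - 1)^2" by simp
        then have "2 * t \<le> t^2 + 1" by (simp add: power2_eq_square algebra_simps)
        moreover have "0 \<le> t^2" by simp
        ultimately show ?thesis by linarith
      qed
      have "norm (\<psi> x) \<le> 1 + norm (\<psi> x)^2" by (rule aux)
      then show ?thesis using n2 by linarith
    qed
    have int\<psi>: "integrable R \<psi>" if R: "prob_space R" "sets R = sets S" for R
    proof -
      have fm: "finite_measure R" using R(1) unfolding prob_space_def by simp
      have sp: "space R = space S" using R(2) by (rule sets_eq_imp_space_eq)
      have "measurable R (borel :: 'g measure) = measurable S borel" by (rule measurable_cong_sets[OF R(2)]) simp
      then have m: "\<psi> \<in> borel_measurable R" using \<psi>m by simp
      have ae: "AE x in R. norm (\<psi> x) \<le> 1 + (C^2)^N" by (rule AE_I2) (use nb sp in simp)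
      show ?thesis by (rule finite_measure.integrable_const_bound[OF fm ae m])
    qed
    have base: "Good (\<lambda>n. fh (\<phi> (y n)))" if y: "y \<in> space S" for y
    proof -
      have "(\<integral>x. (\<Prod>n<N. fh (\<phi> (y n)) (x n)) \<partial>R) = inner (mean_embedding R \<psi>) (\<psi> y)"
        if R: "prob_space R" "sets R = sets S" for R
      proof -
        have sp: "space R = space S" using R(2) by (rule sets_eq_imp_space_eq)
        have "(\<integral>x. (\<Prod>n<N. fh (\<phi> (y n)) (x n)) \<partial>R) = (\<integral>x. inner (\<psi> x) (\<psi> y) \<partial>R)"
          by (rule Bochner_Integration.integral_cong) (use K y sp in auto)
        also have "\<dots> = inner (\<integral>x. \<psi> x \<partial>R) (\<psi> y)"
          by (rule integral_inner_left) (use int\<psi>[OF R] in auto)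
        finally show ?thesis unfolding mean_embedding_def .
      qed
      then show ?thesis unfolding Good_def using P Q sP sQ H1(5) by simp
    qed
    show "P = Q" by (rule PQ_eq) (rule base)
  qed
qed


end
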